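(* Let $q$ be an odd prime power and $f(X)=X(X^{q-1}-c)^{q+1}$ on $\mathbb{F}_{q^2}$, with $a,\beta,g,L_{[u:v]},\mathbb{P}^1$ as in the context. If $c\in\mathbb{F}_q\setminus\{0,1,-1\}$, then $\mathcal{G}(f)$ is isomorphic to \[ \mathcal{C}_1\oplus\bigoplus_{L_{[u:v]}\in\mathbb{P}^1}\frac{q-1}{\operatorname{ord}(g(u,v))}\times\mathcal{C}_{\operatorname{ord}(g(u,v))}. \] If $c=\pm1$, then $\mathcal{G}(f)$ is isomorphic to \[ (\mathcal{C}_1,\mathcal{T}_{q-1})\oplus\bigoplus_{L_{[u:v]}\in\mathbb{P}^1\setminus\{L_0\}}\frac{q-1}{\operatorname{ord}(g(u,v))}\times\mathcal{C}_{\operatorname{ord}(g(u,v))}, \] where $L_0=L_{[1:0]}$ if $c=1$ and $L_0=L_{[0:1]}$ if $c=-1$.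
   Context: $a\in\mathbb{F}_q^*$ is a non-square in $\mathbb{F}_q$, $\beta\in\mathbb{F}_{q^2}$ with $\beta^2=a$; every element of $\mathbb{F}_{q^2}$ is uniquely $x+y\beta$, $x,y\in\mathbb{F}_q$. For $(x,y)\neq(0,0)$, $g(x,y)=\frac{(1-c)^2x^2-(1+c)^2y^2a}{x^2-y^2a}\in\mathbb{F}_q$, which is invariant under scaling $(x,y)$ by $\mathbb{F}_q^*$. For $(u,v)\neq(0,0)$, $L_{[u:v]}=\{\lambda(u+v\beta):\lambda\in\mathbb{F}_q\}$ and $\mathbb{P}^1$ is the set of these $q+1$ lines; $\operatorname{ord}(g(u,v))$ is the multiplicative order in $\mathbb{F}_q^*$. $\mathcal{G}(f)$ is the functional graph (vertices $\mathbb{F}_{q^2}$, edges $\langle x,f(x)\rangle$). Graph notation: $\mathcal{C}_n$ is an oriented cycle of length $n$; $\mathcal{T}_m$ is the directed tree with $m+1$ vertices $P_1,\dots,P_{m+1}$ and edges $P_i\to P_{m+1}$ for $1\le i\le m$; $(\mathcal{C}_n,\mathcal{T}_m)$ is the graph obtained by replacing each vertex of $\mathcal{C}_n$ by a copy of $\mathcal{T}_m$ (identifying the cycle vertex with the root $P_{m+1}$); $\mathcal{G}\oplus\mathcal{H}$ is disjoint union; $k\times\mathcal{H}$ is the disjoint union of $k$ copies of $\mathcal{H}$. *)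

theory Defs
  imports "HOL-Computational_Algebra.Primes"
begin

type_synonym 'v dgraph = "'v set \<times> ('v \<times> 'v) set"

definition fgraph :: "('a \<Rightarrow> 'a) \<Rightarrow> 'a dgraph" where
  "fgraph f = (UNIV, {(x, f x) | x. True})"

definition dg_iso :: "'v dgraph \<Rightarrow> 'w dgraph \<Rightarrow> bool" where
  "dg_iso G H \<longleftrightarrow> (\<exists>h. bij_betw h (fst G) (fst H) \<and>
     (\<forall>x\<in>fst G. \<forall>y\<in>fst G. (x, y) \<in> snd G \<longleftrightarrow> (h x, h y) \<in> snd H))"

text \<open>(C_n, T_m): vertices (i,j), i<n, j<=m; the vertex (i,m) is the root P_{m+1}
  of the i-th tree copy and lies on the cycle; (i,j) -> (i,m) for j<m;
  (i,m) -> ((i+1) mod n, m).\<close>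
definition cyc_tree :: "nat \<Rightarrow> nat \<Rightarrow> (nat \<times> nat) dgraph" where
  "cyc_tree n m = ({(i, j). i < n \<and> j \<le> m},
     {((i, j), (i, m)) | i j. i < n \<and> j < m} \<union>
     {((i, m), ((i + 1) mod n, m)) | i. i < n})"

definition cyc :: "nat \<Rightarrow> (nat \<times> nat) dgraph" where
  "cyc n = cyc_tree n 0"

definition dg_union :: "'v dgraph \<Rightarrow> 'w dgraph \<Rightarrow> ('v + 'w) dgraph" where
  "dg_union G H = (Inl ` fst G \<union> Inr ` fst H,
     {(Inl x, Inl y) | x y. (x, y) \<in> snd G} \<union> {(Inr x, Inr y) | x y. (x, y) \<in> snd H})"

definition dg_sum :: "'i set \<Rightarrow> ('i \<Rightarrow> 'v dgraph) \<Rightarrow> ('i \<times> 'v) dgraph" where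
  "dg_sum I G = ({(i, x). i \<in> I \<and> x \<in> fst (G i)},
     {((i, x), (i, y)) | i x y. i \<in> I \<and> (x, y) \<in> snd (G i)})"

definition dg_copies :: "nat \<Rightarrow> 'v dgraph \<Rightarrow> (nat \<times> 'v) dgraph" where
  "dg_copies k H = dg_sum {..<k} (\<lambda>_. H)"

definition mult_ord :: "'a::field \<Rightarrow> nat" where
  "mult_ord x = (LEAST n. 0 < n \<and> x ^ n = 1)"

definition subF :: "nat \<Rightarrow> 'a::{field,finite} set" where
  "subF q = {x. x ^ q = x}"

definition Lline :: "nat \<Rightarrow> 'a::{field,finite} \<Rightarrow> 'a \<Rightarrow> 'a \<Rightarrow> 'a set" where
  "Lline q \<beta> u v = {l * (u + v * \<beta>) | l. l \<in> subF q}"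

definition P1 :: "nat \<Rightarrow> 'a::{field,finite} \<Rightarrow> 'a set set" where
  "P1 q \<beta> = {Lline q \<beta> u v | u v. u \<in> subF q \<and> v \<in> subF q \<and> (u, v) \<noteq> (0, 0)}"

definition gfun :: "'a::field \<Rightarrow> 'a \<Rightarrow> 'a \<Rightarrow> 'a \<Rightarrow> 'a" where
  "gfun c a x y = ((1 - c)^2 * x^2 - (1 + c)^2 * y^2 * a) / (x^2 - y^2 * a)"

text \<open>g evaluated at a spanning pair (u,v) of the line L (well defined by scale invariance).\<close>
definition gline :: "nat \<Rightarrow> 'a::{field,finite} \<Rightarrow> 'a \<Rightarrow> 'a \<Rightarrow> 'a set \<Rightarrow> 'a" where
  "gline q c a \<beta> L = (case (SOME (u, v). u \<in> subF q \<and> v \<in> subF q \<and> (u, v) \<noteq> (0, 0)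
        \<and> L = Lline q \<beta> u v) of (u, v) \<Rightarrow> gfun c a u v)"

definition line_cycles :: "nat \<Rightarrow> 'a::{field,finite} \<Rightarrow> 'a \<Rightarrow> 'a \<Rightarrow> 'a set set
     \<Rightarrow> ('a set \<times> nat \<times> nat \<times> nat) dgraph" where
  "line_cycles q c a \<beta> S = dg_sum S (\<lambda>L. dg_copies ((q - 1) div mult_ord (gline q c a \<beta> L))
        (cyc (mult_ord (gline q c a \<beta> L))))"

end

theory Submission
  imports Defs "HOL-Number_Theory.Residues"
begin

lemma fermat_card:
  fixes x :: "'a::{field,finite}"
  shows "x ^ card (UNIV :: 'a set) = x"
proof (cases "x = 0")
  case False
  have "x * (\<Prod>y\<in>UNIV-{0}. x * y) = x * x ^ (card (UNIV :: 'a set) - 1) * \<Prod>(UNIV-{0})"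
    by (simp add: prod.distrib mult_ac)
  also have "x * x ^ (card (UNIV :: 'a set) - 1) = x ^ Suc (card (UNIV :: 'a set) - 1)"
    by (subst power_Suc) auto
  also have "Suc (card (UNIV :: 'a set) - 1) = card (UNIV :: 'a set)"
    using finite_UNIV_card_ge_0[where ?'a = 'a] by simp
  also have "(\<Prod>y\<in>UNIV-{0}. x * y) = (\<Prod>y\<in>UNIV-{0}. y)"
    by (rule prod.reindex_bij_witness[of _ "\<lambda>y. y / x" "\<lambda>y. x * y"]) (use False in auto)
  finally show ?thesis
    by simp
qed (use finite_UNIV_card_ge_0[where ?'a = 'a] in auto)

definition tring :: "'a::field ring" where
  "tring = \<lparr>carrier = UNIV, monoid.mult = (*), one = 1, zero = 0, add = (+)\<rparr>"

lemma field_tring: "field (tring :: 'a::field ring)"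
proof -
  have "\<exists>y. x + y = 0" for x :: 'a
    using add.right_inverse by blast
  moreover have "x \<noteq> 0 \<Longrightarrow> \<exists>y. x * y = 1" for x :: 'a
    by (rule exI[of _ "inverse x"]) auto
  ultimately show ?thesis
    unfolding tring_def using add.right_inverse
    by unfold_locales (auto simp:algebra_simps Units_def)
qed

lemma pow_tring: "x [^]\<^bsub>tring\<^esub> (n::nat) = (x::'a::field) ^ n"
  by (induction n) (simp_all add: tring_def)

lemma gen_exists:
  "\<exists>\<zeta>::'a::{field,finite}. \<zeta> \<noteq> 0 \<and> (\<forall>x. x \<noteq> 0 \<longrightarrow> (\<exists>i. x = \<zeta> ^ i))"
proof -
  interpret field "tring :: 'a ring" by (rule field_tring)
  have "finite (carrier (tring :: 'a ring))" by simp
  from finite_field_mult_group_has_gen[OF this] obtain z where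
    z: "z \<in> carrier (mult_of (tring::'a ring))"
    "carrier (mult_of (tring::'a ring)) = {z[^]\<^bsub>tring\<^esub>i | i::nat . i \<in> UNIV}"
    by blast
  have c: "carrier (mult_of (tring::'a ring)) = UNIV - {0}" by (simp add: tring_def)
  show ?thesis
    apply (rule exI[of _ z]) using z unfolding c pow_tring by blast
qed



lemma mult_ord:
  fixes x :: "'a::field"
  assumes "x ^ n = 1" "n > 0"
  shows "mult_ord x > 0" "x ^ mult_ord x = 1" "x ^ m = 1 \<longleftrightarrow> mult_ord x dvd m"
proof -
  have ex: "0 < n \<and> x ^ n = 1" using assms by simp
  show p: "mult_ord x > 0" "x ^ mult_ord x = 1"
    unfolding mult_ord_def using LeastI[of "\<lambda>n. 0 < n \<and> x ^ n = 1", OF ex] by auto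
  have least: "\<And>k. 0 < k \<Longrightarrow> x ^ k = 1 \<Longrightarrow> mult_ord x \<le> k"
    unfolding mult_ord_def by (rule Least_le) simp
  show "x ^ m = 1 \<longleftrightarrow> mult_ord x dvd m"
  proof
    assume m: "x ^ m = 1"
    have "x ^ m = x ^ (m mod mult_ord x) * (x ^ mult_ord x) ^ (m div mult_ord x)"
      by (metis mod_mult_div_eq power_add power_mult)
    hence r: "x ^ (m mod mult_ord x) = 1" using m p by simp
    show "mult_ord x dvd m"
    proof (rule ccontr)
      assume "\<not> mult_ord x dvd m"
      hence "m mod mult_ord x > 0" by (simp add: dvd_eq_mod_eq_0)
      from least[OF this r] show False using p(1) by (meson mod_less_divisor not_le)
    qed
  next
    assume "mult_ord x dvd m"
    then obtain t where "m = mult_ord x * t" by blast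
    thus "x ^ m = 1" using p by (simp add: power_mult)
  qed
qed

lemma power_cancel_diff:
  fixes x :: "'a::field"
  assumes "x \<noteq> 0" "x ^ i = x ^ j" "i \<le> j"
  shows "x ^ (j - i) = 1"
proof -
  have "x ^ j = x ^ i * x ^ (j - i)" using assms(3) by (simp flip: power_add)
  thus ?thesis using assms by simp
qed

locale FF =
  fixes q :: nat and a \<beta> c :: "'a::{field,finite}"
  assumes q3: "q \<ge> 3" and qodd: "odd q" and card: "card (UNIV::'a set) = q^2"
    and frob: "\<And>x y::'a. (x+y)^q = x^q + y^q"
    and a_F: "a \<in> subF q" and a_nz: "a \<noteq> 0" and nsq: "\<not>(\<exists>z\<in>subF q. z^2 = a)"
    and beta: "\<beta>^2 = a" and c_F: "c \<in> subF q"
begin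

lemma fermat: "x ^ (q^2) = (x::'a)"
  using fermat_card[of x] card by simp

lemma frob_neg: "(- x) ^ q = - (x ^ q :: 'a)"
  using qodd by simp

lemma frob_diff: "(x - y) ^ q = x ^ q - (y ^ q :: 'a)"
  using frob[of x "-y"] frob_neg by simp

lemma subF_iff: "(x::'a) \<in> subF q \<longleftrightarrow> x ^ q = x" by (simp add: subF_def)

lemma subF_add: "(x::'a) \<in> subF q \<Longrightarrow> y \<in> subF q \<Longrightarrow> x + y \<in> subF q"
  by (simp add: subF_def frob)
lemma subF_diff: "(x::'a) \<in> subF q \<Longrightarrow> y \<in> subF q \<Longrightarrow> x - y \<in> subF q"
  by (simp add: subF_def frob_diff)
lemma subF_neg: "(x::'a) \<in> subF q \<Longrightarrow> - x \<in> subF q"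
  by (simp add: subF_def frob_neg)
lemma subF_mult: "(x::'a) \<in> subF q \<Longrightarrow> y \<in> subF q \<Longrightarrow> x * y \<in> subF q"
  by (simp add: subF_def power_mult_distrib)
lemma subF_div: "(x::'a) \<in> subF q \<Longrightarrow> y \<in> subF q \<Longrightarrow> x / y \<in> subF q"
  by (simp add: subF_def power_divide)
lemma subF_0: "0 \<in> subF q" using q3 by (simp add: subF_def)
lemma subF_1: "1 \<in> subF q" by (simp add: subF_def)
lemma subF_pow: "(x::'a) \<in> subF q \<Longrightarrow> x ^ n \<in> subF q"
proof -
  assume "x \<in> subF q"
  hence "x ^ q = x" by (simp add: subF_def)
  have "(x ^ n) ^ q = (x ^ q) ^ n" by (metis mult.commute power_mult)
  thus ?thesis using \<open>x ^ q = x\<close> by (simp add: subF_def)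
qed

lemmas subF_closed = subF_add subF_diff subF_neg subF_mult subF_div subF_0 subF_1 subF_pow

lemma beta_nz: "\<beta> \<noteq> 0" using beta a_nz by auto

lemma beta_notF: "\<beta> \<notin> subF q" using nsq beta by blast

lemma beta_frob: "\<beta> ^ q = - \<beta>"
proof -
  have "(\<beta>^q)^2 = (\<beta>^2)^q" by (metis mult.commute power_mult)
  hence "(\<beta>^q)^2 = \<beta>^2" using a_F beta by (simp add: subF_def)
  hence "(\<beta>^q - \<beta>) * (\<beta>^q + \<beta>) = 0" by (simp add: algebra_simps power2_eq_square)
  moreover have "\<beta>^q \<noteq> \<beta>" using beta_notF by (simp add: subF_def)
  ultimately show ?thesis by (simp add: eq_neg_iff_add_eq_0)
qed

lemma q_Suc: "q = Suc (q - 1)" using q3 by simp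

lemma pow_q: "(x::'a) ^ q = x ^ (q - 1) * x"
  by (subst q_Suc) (simp only: power_Suc2)

lemma beta_pow: "\<beta> ^ (q - 1) = -1"
proof -
  have "\<beta> ^ (q-1) * \<beta> = (-1) * \<beta>" using beta_frob pow_q by simp
  thus ?thesis using beta_nz by (simp only: mult_cancel_right) simp
qed

lemma subF_pow1: "(x::'a) \<in> subF q \<Longrightarrow> x \<noteq> 0 \<Longrightarrow> x ^ (q - 1) = 1"
  using pow_q[of x] by (simp add: subF_def)

lemma pow1_subF: "(x::'a) ^ (q - 1) = 1 \<Longrightarrow> x \<in> subF q"
  using pow_q[of x] by (simp add: subF_def)

lemma frob_lin: "(s::'a) \<in> subF q \<Longrightarrow> r \<in> subF q \<Longrightarrow> (s + r * \<beta>)^q = s - r * \<beta>"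
  by (simp add: frob power_mult_distrib beta_frob subF_def)

end


lemma pow_inj:
  fixes x :: "'a::field"
  assumes "x ^ n = 1" "n > 0" "i < mult_ord x" "j < mult_ord x" "x ^ i = x ^ j"
  shows "i = j"
proof -
  have x0: "x \<noteq> 0"
  proof
    assume "x = 0" with assms(1,2) show False by (simp add: power_0_left)
  qed
  have *: "\<And>i j. i \<le> j \<Longrightarrow> j < mult_ord x \<Longrightarrow> x ^ i = x ^ j \<Longrightarrow> i = j"
  proof -
    fix i j assume ij: "i \<le> j" "j < mult_ord x" "x ^ i = x ^ j"
    have "x ^ (j - i) = 1" by (rule power_cancel_diff[OF x0 ij(3) ij(1)])
    hence "mult_ord x dvd (j - i)" using mult_ord[OF assms(1,2)] by blast
    moreover have "j - i < mult_ord x" using ij by simp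
    ultimately have "j - i = 0" using dvd_imp_le by (metis gr0I leD)
    thus "i = j" using ij by simp
  qed
  show ?thesis using *[of i j] *[of j i] assms by (cases "i \<le> j") auto
qed

context FF
begin

definition zeta :: 'a where
  "zeta = (SOME \<zeta>. \<zeta> \<noteq> 0 \<and> (\<forall>x. x \<noteq> 0 \<longrightarrow> (\<exists>i. x = \<zeta> ^ i)))"

lemma zeta: "zeta \<noteq> 0" "\<And>x. x \<noteq> 0 \<Longrightarrow> \<exists>i. x = zeta ^ i"
  using someI_ex[OF gen_exists[where 'a='a]] unfolding zeta_def by blast+

lemma q2: "q^2 = Suc (q^2 - 1)" using q3 by simp

lemma pow_q2: "(x::'a) ^ (q^2 - 1) = 1" if "x \<noteq> 0"
proof -
  have "x ^ (q^2 - 1) * x = x" using fermat[of x] q2 by (metis power_Suc2)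
  thus ?thesis using that by simp
qed

lemma qq: "q^2 - 1 = (q + 1) * (q - 1)"
  using q3 by (simp add: power2_eq_square algebra_simps)

lemma N_pos: "q^2 - 1 > 0"
proof -
  have "q * q \<ge> 3 * 3" using q3 mult_le_mono by blast
  thus ?thesis by (simp add: power2_eq_square)
qed

lemma zeta_ord: "mult_ord zeta = q^2 - 1"
proof -
  let ?d = "mult_ord zeta"
  note mo = mult_ord[OF pow_q2[OF zeta(1)] N_pos]
  have dvd: "?d dvd q^2 - 1" using mo(3)[of "q^2-1"] pow_q2[OF zeta(1)] by simp
  have "UNIV - {0} \<subseteq> (\<lambda>i. zeta ^ i) ` {..<?d}"
  proof
    fix x :: 'a assume "x \<in> UNIV - {0}"
    then obtain i where i: "x = zeta ^ i" using zeta by blast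
    have "zeta ^ i = zeta ^ (i mod ?d) * (zeta ^ ?d) ^ (i div ?d)"
      by (metis mod_mult_div_eq power_add power_mult)
    hence "x = zeta ^ (i mod ?d)" using mo i by simp
    moreover have "i mod ?d < ?d" using mo by simp
    ultimately show "x \<in> (\<lambda>i. zeta ^ i) ` {..<?d}" by blast
  qed
  hence "card (UNIV - {0::'a}) \<le> ?d"
    by (metis card_image_le card_lessThan finite_lessThan le_trans card_mono finite_imageI)
  moreover have "card (UNIV - {0::'a}) = q^2 - 1" using card by (simp add: card_Diff_singleton)
  ultimately show ?thesis using dvd N_pos by (simp add: dvd_imp_le le_antisym)
qed

lemma zeta_eq1: "zeta ^ n = 1 \<longleftrightarrow> (q^2 - 1) dvd n"
  using mult_ord(3)[OF pow_q2[OF zeta(1)] N_pos] zeta_ord by simp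

definition z :: 'a where "z = zeta ^ (q + 1)"

lemma z_eq1: "z ^ j = 1 \<longleftrightarrow> (q - 1) dvd j"
proof -
  have "z ^ j = zeta ^ ((q + 1) * j)" unfolding z_def by (rule power_mult[symmetric])
  hence "z ^ j = 1 \<longleftrightarrow> (q + 1) * (q - 1) dvd (q + 1) * j" using zeta_eq1 qq by simp
  thus ?thesis using nat_mult_dvd_cancel_disj[of "q+1" "q-1" j] by simp
qed

lemma z_q1: "z ^ (q - 1) = 1" using z_eq1 by simp

lemma z_nz: "z \<noteq> 0" using zeta by (simp add: z_def)

lemma qm1_pos: "q - 1 > 0" using q3 by simp

lemma z_ord: "mult_ord z = q - 1"
proof -
  have e: "z ^ (q - 1) = 1" using z_eq1 by simp
  note mo = mult_ord[OF e qm1_pos]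
  have "mult_ord z dvd q - 1" using mo(3)[of "q-1"] e by simp
  moreover have "q - 1 dvd mult_ord z" using mo(2) z_eq1[of "mult_ord z"] by simp
  ultimately show ?thesis by (simp add: dvd_antisym)
qed

lemma z_inj: "inj_on (\<lambda>j. z ^ j) {..<q-1}"
  by (rule inj_onI) (use pow_inj[of z "q - 1"] z_eq1 z_ord qm1_pos in auto)

lemma zpow_F: "z ^ j \<in> subF q"
proof (rule pow1_subF)
  have "(z ^ j) ^ (q - 1) = (z ^ (q - 1)) ^ j" by (metis mult.commute power_mult)
  thus "(z ^ j) ^ (q - 1) = 1" using z_q1 by simp
qed

lemma zpow_nz: "z ^ j \<noteq> 0" using z_nz by simp

lemma zpow_mod: "z ^ j = z ^ (j mod (q - 1))"
proof -
  have "z ^ j = z ^ (j mod (q-1)) * (z ^ (q-1)) ^ (j div (q-1))"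
    by (metis mod_mult_div_eq power_add power_mult)
  thus ?thesis using z_q1 by simp
qed

lemma Fstar: "(subF q :: 'a set) - {0} = (\<lambda>j. z ^ j) ` {..<q-1}"
proof
  show "(\<lambda>j. z ^ j) ` {..<q-1} \<subseteq> subF q - {0}" using zpow_F z_nz by auto
next
  show "subF q - {0} \<subseteq> (\<lambda>j. z ^ j) ` {..<q-1}"
  proof
    fix x :: 'a assume x: "x \<in> subF q - {0}"
    then obtain n where n: "x = zeta ^ n" using zeta by blast
    have "x ^ (q - 1) = 1" using x subF_pow1 by blast
    hence "zeta ^ (n * (q - 1)) = 1" using n by (simp add: power_mult)
    hence "(q + 1) * (q - 1) dvd n * (q - 1)" using zeta_eq1 qq by simp
    hence "(q - 1) * (q + 1) dvd (q - 1) * n" by (simp add: mult.commute)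
    hence "q + 1 dvd n" using qm1_pos nat_mult_dvd_cancel_disj[of "q-1" "q+1" n] by simp
    then obtain t where t: "n = (q + 1) * t" by blast
    hence "x = z ^ t" using n unfolding z_def by (simp only: power_mult)
    hence "x = z ^ (t mod (q - 1))" using zpow_mod by simp
    moreover have "t mod (q - 1) < q - 1" using qm1_pos by simp
    ultimately show "x \<in> (\<lambda>j. z ^ j) ` {..<q-1}" by blast
  qed
qed

lemma card_Fstar: "card ((subF q :: 'a set) - {0}) = q - 1"
  unfolding Fstar using card_image[OF z_inj] by simp

lemma card_F: "card (subF q :: 'a set) = q"
proof -
  have "card (subF q - {0::'a}) = card (subF q :: 'a set) - 1"
    using card_Diff_singleton[OF subF_0] by simp
  moreover have "card (subF q :: 'a set) > 0" using subF_0 by (auto simp: card_gt_0_iff)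
  ultimately show ?thesis using card_Fstar q3 by arith
qed

lemma decomp: "\<exists>u v. u \<in> subF q \<and> v \<in> subF q \<and> x = u + v * \<beta>"
proof -
  let ?phi = "\<lambda>(u, v). u + v * \<beta>"
  have inj: "inj_on ?phi (subF q \<times> subF q)"
  proof (rule inj_onI, clarify)
    fix u v u' v' assume uv: "u \<in> subF q" "v \<in> subF q" "u' \<in> subF q" "v' \<in> subF q"
      and e: "u + v * \<beta> = u' + v' * \<beta>"
    show "u = u' \<and> v = v'"
    proof (cases "v = v'")
      case True thus ?thesis using e by simp
    next
      case False
      hence "\<beta> = (u' - u) / (v - v')" using e
        by (simp add: field_simps)
      hence "\<beta> \<in> subF q" using uv subF_closed by simp
      thus ?thesis using beta_notF by simp
    qed
  qed
  have "card (?phi ` (subF q \<times> subF q)) = q^2"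
    using card_image[OF inj] card_F by (simp add: card_cartesian_product power2_eq_square)
  hence "?phi ` (subF q \<times> subF q) = UNIV"
    using card by (intro card_subset_eq) auto
  hence "x \<in> ?phi ` (subF q \<times> subF q)" by simp
  thus ?thesis by auto
qed

end


context FF
begin

definition line :: "'a \<Rightarrow> 'a set" where "line w = {l * w | l. l \<in> subF q}"

lemma Lline_line: "Lline q \<beta> u v = line (u + v * \<beta>)"
  by (simp add: Lline_def line_def)

lemma line_self: "w \<in> line w"
  unfolding line_def using subF_1 by force

lemma line_eq:
  assumes "w \<noteq> 0" "x \<in> line w" "x \<noteq> 0"
  shows "line x = line w"
proof -
  obtain l where l: "l \<in> subF q" "x = l * w" using assms(2) unfolding line_def by blast
  have l0: "l \<noteq> 0" using l assms(3) by auto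
  show ?thesis
  proof
    show "line x \<subseteq> line w" unfolding line_def using l subF_mult by (force simp: mult.assoc)
    show "line w \<subseteq> line x"
    proof
      fix y assume "y \<in> line w"
      then obtain m where m: "m \<in> subF q" "y = m * w" unfolding line_def by blast
      have "y = (m / l) * x" using l l0 m by simp
      moreover have "m / l \<in> subF q" using m l subF_div by simp
      ultimately show "y \<in> line x" unfolding line_def by blast
    qed
  qed
qed

lemma line_meet:
  assumes "w1 \<noteq> 0" "w2 \<noteq> 0" "x \<noteq> 0" "x \<in> line w1" "x \<in> line w2"
  shows "line w1 = line w2"
  using line_eq[OF assms(1) assms(4) assms(3)] line_eq[OF assms(2) assms(5) assms(3)] by simp

lemma uv_nz:
  assumes "u \<in> subF q" "v \<in> subF q" "(u, v) \<noteq> (0, 0)"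
  shows "u + v * \<beta> \<noteq> 0"
proof
  assume e: "u + v * \<beta> = 0"
  show False
  proof (cases "v = 0")
    case True thus False using e assms by simp
  next
    case False
    hence "\<beta> = - u / v" using e by (simp add: field_simps add_eq_0_iff)
    hence "\<beta> \<in> subF q" using assms subF_closed by simp
    thus False using beta_notF by simp
  qed
qed

lemma P1_char: "L \<in> P1 q \<beta> \<Longrightarrow> \<exists>w. w \<noteq> 0 \<and> L = line w"
  unfolding P1_def using uv_nz Lline_line by blast

lemma line_in_P1:
  assumes "x \<noteq> 0" shows "line x \<in> P1 q \<beta>"
proof -
  obtain u v where uv: "u \<in> subF q" "v \<in> subF q" "x = u + v * \<beta>" using decomp by blast
  have "(u, v) \<noteq> (0, 0)" using assms uv by auto
  thus ?thesis unfolding P1_def using uv Lline_line by blast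
qed

definition rep :: "'a set \<Rightarrow> 'a" where "rep L = (SOME w. w \<noteq> 0 \<and> L = line w)"

lemma rep: "L \<in> P1 q \<beta> \<Longrightarrow> rep L \<noteq> 0 \<and> L = line (rep L)"
  unfolding rep_def using someI_ex[OF P1_char] by blast

definition gval :: "'a \<Rightarrow> 'a" where "gval w = (w ^ (q - 1) - c) ^ (q + 1)"

definition ff :: "'a \<Rightarrow> 'a" where "ff X = X * (X ^ (q - 1) - c) ^ (q + 1)"

lemma gval_scale: "l \<in> subF q \<Longrightarrow> l \<noteq> 0 \<Longrightarrow> gval (l * w) = gval w"
proof -
  assume "l \<in> subF q" "l \<noteq> 0"
  hence "l ^ (q - 1) = 1" by (rule subF_pow1)
  thus ?thesis unfolding gval_def by (simp only: power_mult_distrib mult_1_left)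
qed

lemma gval_line:
  assumes "w \<noteq> 0" "x \<in> line w"  "x \<noteq> 0"
  shows "gval x = gval w"
proof -
  obtain l where l: "l \<in> subF q" "x = l * w" using assms(2) unfolding line_def by blast
  thus ?thesis using gval_scale assms(3) by auto
qed

lemma ff_line: "l \<in> subF q \<Longrightarrow> ff (l * w) = l * gval w * w"
proof (cases "l = 0")
  case False
  assume "l \<in> subF q"
  thus ?thesis using gval_scale[OF _ False, of w] False unfolding ff_def gval_def by simp
qed (simp add: ff_def)

lemma ff_0: "ff 0 = 0" by (simp add: ff_def)

lemma gval_gfun:
  assumes uv: "u \<in> subF q" "v \<in> subF q" and y0: "u + v * \<beta> \<noteq> 0"
  shows "gval (u + v * \<beta>) = gfun c a u v"
proof -
  define y where "y = u + v * \<beta>"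
  have yq: "y ^ q = u - v * \<beta>" unfolding y_def using frob_lin[OF uv] .
  have y0': "y \<noteq> 0" using y0 y_def by simp
  have yq0: "u - v * \<beta> \<noteq> 0" using yq y0' by (metis power_eq_0_iff)
  have ym: "y ^ (q - 1) = (u - v * \<beta>) / y" using pow_q[of y] yq y0' by (simp add: field_simps)
  define t where "t = (1 - c) * u + (- ((1 + c) * v)) * \<beta>"
  have tF: "(1 - c) * u \<in> subF q" "- ((1 + c) * v) \<in> subF q" using uv c_F by (auto intro: subF_mult subF_diff subF_add subF_neg subF_1)
  have tq: "t ^ q = (1 - c) * u + (1 + c) * v * \<beta>"
    unfolding t_def using frob_lin[OF tF] by simp
  have e1: "y ^ (q - 1) - c = t / y" using ym y0' unfolding t_def y_def
    by (simp add: field_simps)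
  have "gval y = (t / y) ^ q * (t / y)" unfolding gval_def e1 by simp
  also have "\<dots> = (t ^ q * t) / (y ^ q * y)" by (simp add: power_divide)
  also have "t ^ q * t = (1 - c)^2 * u^2 - (1 + c)^2 * v^2 * a"
    unfolding tq unfolding t_def using beta[symmetric] by (simp add: power2_eq_square algebra_simps)
  also have "y ^ q * y = u^2 - v^2 * a"
    unfolding yq unfolding y_def using beta[symmetric] by (simp add: power2_eq_square algebra_simps)
  finally show ?thesis unfolding gfun_def y_def .
qed

lemma gline_eq:
  assumes L: "L \<in> P1 q \<beta>" and w: "w \<noteq> 0" "L = line w"
  shows "gline q c a \<beta> L = gval w"
proof -
  define P where "P = (\<lambda>p. case p of (u, v) \<Rightarrow> u \<in> subF q \<and> v \<in> subF q \<and> (u, v) \<noteq> (0, 0)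
        \<and> L = Lline q \<beta> u v)"
  have ex: "\<exists>p. P p" using L unfolding P1_def P_def by auto
  define p where "p = (SOME p. P p)"
  have Pp: "P p" unfolding p_def using someI_ex[OF ex] .
  obtain u v where p: "p = (u, v)" by (cases p)
  have uv: "u \<in> subF q" "v \<in> subF q" "(u, v) \<noteq> (0, 0)" "L = line (u + v * \<beta>)"
    using Pp unfolding P_def p Lline_line by auto
  have g: "gline q c a \<beta> L = gfun c a u v"
    unfolding gline_def using p unfolding p_def P_def by simp
  have nz: "u + v * \<beta> \<noteq> 0" using uv_nz uv by blast
  have "u + v * \<beta> \<in> line w" using uv w line_self by metis
  hence "gval (u + v * \<beta>) = gval w" using gval_line w nz by blast
  thus ?thesis using g gval_gfun uv nz by simp
qed

lemma gval_F: "gval w \<in> subF q"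
proof -
  define y where "y = w ^ (q - 1) - c"
  have "(y ^ (q + 1)) ^ q = y ^ (q^2) * y ^ q"
    by (simp add: power_mult[symmetric] power_add[symmetric] power2_eq_square algebra_simps)
  also have "\<dots> = y ^ (q + 1)" using fermat[of y] by (simp add: mult.commute)
  finally show ?thesis unfolding gval_def y_def subF_def by simp
qed

lemma gval_zero:
  assumes w0: "w \<noteq> 0" and g0: "gval w = 0"
  shows "(c = 1 \<and> line w = line 1) \<or> (c = -1 \<and> line w = line \<beta>)"
proof -
  have wc: "w ^ (q - 1) = c" using g0 unfolding gval_def by (metis (no_types) eq_iff_diff_eq_0 power_eq_0_iff)
  have A: "(w ^ (q - 1)) ^ (q + 1) = 1"
  proof -
    have "(w ^ (q - 1)) ^ (q + 1) = w ^ ((q + 1) * (q - 1))" by (metis power_mult mult.commute)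
    also have "\<dots> = 1" by (simp only: qq[symmetric] pow_q2[OF w0])
    finally show ?thesis .
  qed
  hence c1: "c ^ (q + 1) = 1" using wc by simp
  have cq: "c ^ q = c" using c_F by (simp add: subF_def)
  have "c ^ (q + 1) = c ^ q * c" by (simp only: power_add power_one_right)
  hence "c * c = 1" using c1 cq by simp
  hence "(c - 1) * (c + 1) = 0" by (simp add: algebra_simps)
  hence c: "c = 1 \<or> c = -1" by (simp add: eq_neg_iff_add_eq_0)
  show ?thesis
  proof (cases "c = 1")
    case True
    hence "w \<in> subF q" using wc pow1_subF by simp
    hence "w \<in> line 1" unfolding line_def by force
    thus ?thesis using line_eq[of 1 w] w0 True by simp
  next
    case False
    hence cm: "c = -1" using c by simp
    have "(w / \<beta>) ^ (q - 1) = 1" using wc cm beta_pow by (simp add: power_divide)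
    hence "w / \<beta> \<in> subF q" using pow1_subF by simp
    moreover have "w = (w / \<beta>) * \<beta>" using beta_nz by simp
    ultimately have "w \<in> line \<beta>" unfolding line_def by blast
    thus ?thesis using line_eq[of \<beta> w] w0 beta_nz cm by simp
  qed
qed

end


lemma iso_fun:
  fixes k :: "'v \<Rightarrow> 'a" and f :: "'a \<Rightarrow> 'a"
  assumes bij: "bij_betw k V (UNIV::'a set)" and cl: "\<And>v. v \<in> V \<Longrightarrow> \<tau> v \<in> V"
    and comm: "\<And>v. v \<in> V \<Longrightarrow> k (\<tau> v) = f (k v)"
    and edge: "\<And>v w. v \<in> V \<Longrightarrow> w \<in> V \<Longrightarrow> (v, w) \<in> E \<longleftrightarrow> w = \<tau> v"
  shows "dg_iso (fgraph f) (V, E)"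
proof -
  define h where "h = inv_into V k"
  have hb: "bij_betw h UNIV V" unfolding h_def using bij_betw_inv_into[OF bij] .
  have hV: "h x \<in> V" for x using hb by (auto simp: bij_betw_def)
  have kh: "k (h x) = x" for x unfolding h_def using bij
    by (simp add: bij_betw_inv_into_right)
  have inj: "inj_on k V" using bij by (simp add: bij_betw_def)
  have "(x, y) \<in> snd (fgraph f) \<longleftrightarrow> (h x, h y) \<in> E" for x y
  proof -
    have "(h x, h y) \<in> E \<longleftrightarrow> h y = \<tau> (h x)" using edge hV by blast
    also have "\<dots> \<longleftrightarrow> k (h y) = k (\<tau> (h x))" using inj_on_eq_iff[OF inj hV[of y] cl[OF hV[of x]]] by simp
    also have "\<dots> \<longleftrightarrow> y = f x" using kh comm hV by simp
    finally show ?thesis by (simp add: fgraph_def)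
  qed
  thus ?thesis unfolding dg_iso_def using hb by (auto simp: fgraph_def)
qed

definition dd :: "nat \<Rightarrow> 'a::{field,finite} \<Rightarrow> 'a \<Rightarrow> 'a \<Rightarrow> 'a set \<Rightarrow> nat" where
  "dd q c a \<beta> L = mult_ord (gline q c a \<beta> L)"

definition tau :: "nat \<Rightarrow> nat \<Rightarrow> 'a::{field,finite} \<Rightarrow> 'a \<Rightarrow> 'a \<Rightarrow> (nat \<times> nat) + ('a set \<times> nat \<times> nat \<times> nat)
   \<Rightarrow> (nat \<times> nat) + ('a set \<times> nat \<times> nat \<times> nat)" where
  "tau M q c a \<beta> v = (case v of Inl _ \<Rightarrow> Inl (0, M)
     | Inr (L, j, i, _) \<Rightarrow> Inr (L, j, Suc i mod dd q c a \<beta> L, 0))"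

lemma fst_target:
  "fst (dg_union (cyc_tree 1 M) (line_cycles q c a \<beta> S)) =
    {Inl (0, j) | j. j \<le> M} \<union>
    {Inr (L, j, i, 0) | L j i. L \<in> S \<and> j < (q - 1) div dd q c a \<beta> L \<and> i < dd q c a \<beta> L}"
  unfolding dg_union_def cyc_tree_def line_cycles_def dg_sum_def dg_copies_def cyc_def dd_def
  by auto

lemma edge_target:
  assumes "v \<in> fst (dg_union (cyc_tree 1 M) (line_cycles q c a \<beta> S))"
    "w \<in> fst (dg_union (cyc_tree 1 M) (line_cycles q c a \<beta> S))"
  shows "(v, w) \<in> snd (dg_union (cyc_tree 1 M) (line_cycles q c a \<beta> S)) \<longleftrightarrow> w = tau M q c a \<beta> v"
  using assms unfolding fst_target
  unfolding dg_union_def cyc_tree_def line_cycles_def dg_sum_def dg_copies_def cyc_def dd_def tau_def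
  by auto



context FF
begin

lemma gord:
  assumes g: "(g::'a) \<in> subF q" "g \<noteq> 0"
  shows "mult_ord g > 0" "g ^ mult_ord g = 1" "(q - 1) div mult_ord g * mult_ord g = q - 1"
    "\<And>i. g ^ i = g ^ (i mod mult_ord g)"
proof -
  have e: "g ^ (q - 1) = 1" using subF_pow1 g by blast
  note mo = mult_ord[OF e qm1_pos]
  show "mult_ord g > 0" "g ^ mult_ord g = 1" using mo by auto
  have "mult_ord g dvd q - 1" using mo(3)[of "q-1"] e by simp
  thus "(q - 1) div mult_ord g * mult_ord g = q - 1" by simp
  fix i
  have "g ^ i = g ^ (i mod mult_ord g) * (g ^ mult_ord g) ^ (i div mult_ord g)"
    by (metis mod_mult_div_eq power_add power_mult)
  thus "g ^ i = g ^ (i mod mult_ord g)" using mo by simp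
qed

lemma enum_inj:
  assumes g: "g \<in> subF q" "g \<noteq> 0"
  shows "inj_on (\<lambda>(j, i). z ^ j * g ^ i) ({..<(q - 1) div mult_ord g} \<times> {..<mult_ord g})"
proof -
  define d where "d = mult_ord g"
  define m where "m = (q - 1) div d"
  note go = gord[OF g, folded d_def]
  have md: "m * d = q - 1" using go unfolding m_def by simp
  have e: "g ^ (q - 1) = 1" using subF_pow1 g by blast
  have *: "j = j' \<and> i = i'" if ij: "j \<le> j'" "j' < m" "i < d" "i' < d" "z ^ j * g ^ i = z ^ j' * g ^ i'"
    for j j' i i'
  proof -
    have "z ^ j' = z ^ j * z ^ (j' - j)" using ij(1) by (simp flip: power_add)
    hence "z ^ j * g ^ i = z ^ j * (z ^ (j' - j) * g ^ i')" using ij(5) by simp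
    hence gi: "g ^ i = z ^ (j' - j) * g ^ i'" using z_nz by simp
    hence "(g ^ i) ^ d = (z ^ (j' - j)) ^ d * (g ^ i') ^ d" by (simp add: power_mult_distrib)
    moreover have "(g ^ i) ^ d = 1" "(g ^ i') ^ d = 1" using go(2)
      by (metis mult.commute power_mult power_one)+
    ultimately have "z ^ ((j' - j) * d) = 1" by (simp add: power_mult)
    hence "m * d dvd (j' - j) * d" using z_eq1 md by simp
    hence "m dvd j' - j" using go(1) by simp
    moreover have "j' - j < m" using ij by simp
    ultimately have "j' - j = 0" by (metis dvd_imp_le gr0I leD)
    hence jj: "j = j'" using ij by simp
    hence "g ^ i = g ^ i'" using gi by simp
    hence "i = i'" using pow_inj[OF e qm1_pos] ij unfolding d_def by blast
    thus ?thesis using jj by simp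
  qed
  show ?thesis
  proof (rule inj_onI)
    fix x y assume x: "x \<in> {..<(q - 1) div mult_ord g} \<times> {..<mult_ord g}"
      and y: "y \<in> {..<(q - 1) div mult_ord g} \<times> {..<mult_ord g}"
      and e: "(\<lambda>(j, i). z ^ j * g ^ i) x = (\<lambda>(j, i). z ^ j * g ^ i) y"
    obtain j i where xx: "x = (j, i)" by (cases x)
    obtain j' i' where yy: "y = (j', i')" by (cases y)
    have r: "j < m" "i < d" "j' < m" "i' < d" "z ^ j * g ^ i = z ^ j' * g ^ i'"
      using x y e unfolding xx yy m_def d_def by auto
    show "x = y" using *[of j j' i i'] *[of j' j i' i] r unfolding xx yy
      by (cases "j \<le> j'") auto
  qed
qed

lemma enum_onto:
  assumes g: "g \<in> subF q" "g \<noteq> 0"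
  shows "(\<lambda>(j, i). z ^ j * g ^ i) ` ({..<(q - 1) div mult_ord g} \<times> {..<mult_ord g}) = subF q - {0}"
proof (rule card_subset_eq)
  show "finite (subF q - {0::'a})" by simp
  show "(\<lambda>(j, i). z ^ j * g ^ i) ` ({..<(q - 1) div mult_ord g} \<times> {..<mult_ord g}) \<subseteq> subF q - {0}"
    using g by (auto simp: z_nz intro!: subF_mult[OF zpow_F subF_pow[OF g(1)]])
  have "card ((\<lambda>(j, i). z ^ j * g ^ i) ` ({..<(q - 1) div mult_ord g} \<times> {..<mult_ord g}))
      = (q - 1) div mult_ord g * mult_ord g"
    using card_image[OF enum_inj[OF g]] by (simp add: card_cartesian_product)
  thus "card ((\<lambda>(j, i). z ^ j * g ^ i) ` ({..<(q - 1) div mult_ord g} \<times> {..<mult_ord g}))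
      = card (subF q - {0::'a})"
    using gord(3)[OF g] card_Fstar by simp
qed

end


context FF
begin

lemma main:
  assumes hS: "S \<subseteq> P1 q \<beta>" and hg: "\<And>L. L \<in> S \<Longrightarrow> gline q c a \<beta> L \<noteq> 0"
    and hM: "(M = 0 \<and> S = P1 q \<beta>) \<or> (M = q - 1 \<and> w0 \<noteq> 0 \<and> gval w0 = 0 \<and> S = P1 q \<beta> - {line w0})"
  shows "dg_iso (fgraph ff) (dg_union (cyc_tree 1 M) (line_cycles q c a \<beta> S))"
proof -
  define T where "T = dg_union (cyc_tree 1 M) (line_cycles q c a \<beta> S)"
  define G where "G L = gline q c a \<beta> L" for L
  have GL: "G L = gval (rep L)" "G L \<in> subF q" "G L \<noteq> 0" "rep L \<noteq> 0" "L = line (rep L)"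
    if "L \<in> S" for L
  proof -
    have P: "L \<in> P1 q \<beta>" using that hS by blast
    show "G L = gval (rep L)" unfolding G_def using gline_eq[OF P] rep[OF P] by blast
    thus "G L \<in> subF q" using gval_F by simp
    show "G L \<noteq> 0" unfolding G_def using hg that .
    show "rep L \<noteq> 0" "L = line (rep L)" using rep[OF P] by auto
  qed
  have ddG: "dd q c a \<beta> L = mult_ord (G L)" for L unfolding dd_def G_def ..
  define V where "V = fst T"
  have V: "V = {Inl (0, j) | j. j \<le> M} \<union>
    {Inr (L, j, i, 0) | L j i. L \<in> S \<and> j < (q - 1) div mult_ord (G L) \<and> i < mult_ord (G L)}"
    unfolding V_def T_def fst_target ddG ..
  define k where "k (v :: (nat \<times> nat) + ('a set \<times> nat \<times> nat \<times> nat)) = (case v of Inl (i, j) \<Rightarrow> (if j = M then 0 else z ^ j * w0)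
      | Inr (L, j, i, _) \<Rightarrow> z ^ j * G L ^ i * rep L)" for v
  define \<tau> where "\<tau> = tau M q c a \<beta>"
  have tauI: "\<tau> (Inl x) = Inl (0, M)" for x unfolding \<tau>_def tau_def by simp
  have tauR: "\<tau> (Inr (L, j, i, 0)) = Inr (L, j, Suc i mod mult_ord (G L), 0)" for L j i
    unfolding \<tau>_def tau_def ddG by simp
  have cl: "\<tau> v \<in> V" if "v \<in> V" for v
    using that gord(1)[OF GL(2,3)] unfolding V tauI tauR by (auto simp: tauI tauR)
  have comm: "k (\<tau> v) = ff (k v)" if "v \<in> V" for v
  proof -
    from that consider (l) j where "j \<le> M" "v = Inl (0, j)"
      | (r) L j i where "L \<in> S" "j < (q - 1) div mult_ord (G L)" "i < mult_ord (G L)" "v = Inr (L, j, i, 0)"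
      unfolding V by blast
    thus ?thesis
    proof cases
      case l
      show ?thesis
      proof (cases "j = M")
        case True thus ?thesis using l by (simp add: tauI k_def ff_0)
      next
        case False
        hence w: "gval w0 = 0" using hM l by auto
        have "ff (z ^ j * w0) = 0" using ff_line[OF zpow_F, of j w0] w by simp
        thus ?thesis using l False by (simp add: tauI k_def)
      qed
    next
      case r
      note g = GL[OF r(1)]
      have "G L ^ Suc i = G L ^ (Suc i mod mult_ord (G L))" by (rule gord(4)[OF g(2,3)])
      hence "k (\<tau> v) = z ^ j * G L ^ Suc i * rep L" using r by (simp add: tauR k_def)
      moreover have "ff (k v) = (z ^ j * G L ^ i) * gval (rep L) * rep L"
      proof -
        have lF: "z ^ j * G L ^ i \<in> subF q" using zpow_F subF_pow g(2) subF_mult by blast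
        have "k v = (z ^ j * G L ^ i) * rep L" unfolding r k_def by simp
        thus ?thesis using ff_line[OF lF, of "rep L"] by simp
      qed
      ultimately show ?thesis using g(1) by (simp add: algebra_simps)
    qed
  qed
  have onto: "k ` V = UNIV"
  proof -
    have "x \<in> k ` V" for x :: 'a
    proof (cases "x = 0")
      case True
      have "Inl (0, M) \<in> V" unfolding V by blast
      moreover have "k (Inl (0, M)) = 0" by (simp add: k_def)
      ultimately show ?thesis using True by force
    next
      case False
      have P: "line x \<in> P1 q \<beta>" using line_in_P1[OF False] .
      show ?thesis
      proof (cases "line x \<in> S")
        case True
        define L where "L = line x"
        note g = GL[OF True[folded L_def]]
        have "x \<in> line (rep L)" using g(5) line_self unfolding L_def by metis
        then obtain l where l: "l \<in> subF q" "x = l * rep L" unfolding line_def by blast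
        have "l \<noteq> 0" using l False by auto
        hence "l \<in> (\<lambda>(j, i). z ^ j * G L ^ i) ` ({..<(q - 1) div mult_ord (G L)} \<times> {..<mult_ord (G L)})"
          using enum_onto[OF g(2,3)] l by blast
        then obtain j i where ji: "j < (q - 1) div mult_ord (G L)" "i < mult_ord (G L)"
          "l = z ^ j * G L ^ i" by auto
        have "Inr (L, j, i, 0) \<in> V" unfolding V using ji True L_def by blast
        moreover have "k (Inr (L, j, i, 0)) = x" using ji l by (simp add: k_def)
        ultimately show ?thesis by force
      next
        case False
        hence M: "M = q - 1" "w0 \<noteq> 0" "line x = line w0" using hM P by auto
        have "x \<in> line w0" using M line_self by metis
        then obtain l where l: "l \<in> subF q" "x = l * w0" unfolding line_def by blast
        have "l \<noteq> 0" using l \<open>x \<noteq> 0\<close> by auto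
        hence "l \<in> (\<lambda>j. z ^ j) ` {..<q-1}" using Fstar l by blast
        then obtain j where j: "j < q - 1" "l = z ^ j" by blast
        have "Inl (0, j) \<in> V" unfolding V using j M by auto
        moreover have "k (Inl (0, j)) = x" using j l M by (simp add: k_def)
        ultimately show ?thesis by force
      qed
    qed
    thus ?thesis by auto
  qed
  have kR: "k (Inr (L, j, i, 0)) \<noteq> 0 \<and> k (Inr (L, j, i, 0)) \<in> L" if "L \<in> S" for L j i
  proof -
    note g = GL[OF that]
    have "z ^ j * G L ^ i \<in> subF q" using zpow_F subF_pow g(2) subF_mult by blast
    hence "k (Inr (L, j, i, 0)) \<in> line (rep L)" unfolding k_def line_def by auto
    thus ?thesis using g z_nz by (simp add: k_def)
  qed
  have inj: "inj_on k V"
  proof (rule inj_onI)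
    fix v1 v2 assume v1: "v1 \<in> V" and v2: "v2 \<in> V" and e: "k v1 = k v2"
    from v1 consider (l) j where "j \<le> M" "v1 = Inl (0, j)"
      | (r) L j i where "L \<in> S" "j < (q - 1) div mult_ord (G L)" "i < mult_ord (G L)" "v1 = Inr (L, j, i, 0)"
      unfolding V by blast
    thus "v1 = v2"
    proof cases
      case l
      from v2 consider (l') j' where "j' \<le> M" "v2 = Inl (0, j')"
        | (r') L' j' i' where "L' \<in> S" "j' < (q - 1) div mult_ord (G L')" "i' < mult_ord (G L')" "v2 = Inr (L', j', i', 0)"
        unfolding V by blast
      thus ?thesis
      proof cases
        case l'
        show ?thesis
        proof (cases "j = M \<or> j' = M")
          case True
          hence "j = M \<and> j' = M"
            using e l l' hM z_nz by (auto simp: k_def split: if_splits)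
          thus ?thesis using l l' by simp
        next
          case False
          hence "z ^ j * w0 = z ^ j' * w0" "j < q - 1" "j' < q - 1" "w0 \<noteq> 0"
            using e l l' hM by (auto simp: k_def)
          hence "j = j'" using inj_onD[OF z_inj] by auto
          thus ?thesis using l l' by simp
        qed
      next
        case r'
        note kr = kR[OF r'(1), of j' i']
        hence jM: "j \<noteq> M" using e l r' by (auto simp: k_def)
        hence M: "M = q - 1" "w0 \<noteq> 0" "S = P1 q \<beta> - {line w0}" using hM l by auto
        have x: "k v1 = z ^ j * w0" using jM l by (simp add: k_def)
        have "z ^ j * w0 \<in> line w0" unfolding line_def using zpow_F by blast
        moreover have "z ^ j * w0 \<noteq> 0" using z_nz M by simp
        moreover have "z ^ j * w0 \<in> line (rep L')" using kr e x r' GL[OF r'(1)] by metis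
        ultimately have "line w0 = line (rep L')" using line_meet M GL[OF r'(1)] by blast
        hence "L' = line w0" using GL[OF r'(1)] by simp
        thus ?thesis using M r' by simp
      qed
    next
      case r
      note g = GL[OF r(1)]
      from v2 consider (l') j' where "j' \<le> M" "v2 = Inl (0, j')"
        | (r') L' j' i' where "L' \<in> S" "j' < (q - 1) div mult_ord (G L')" "i' < mult_ord (G L')" "v2 = Inr (L', j', i', 0)"
        unfolding V by blast
      thus ?thesis
      proof cases
        case l'
        note kr = kR[OF r(1), of j i]
        hence jM: "j' \<noteq> M" using e l' r by (auto simp: k_def)
        hence M: "M = q - 1" "w0 \<noteq> 0" "S = P1 q \<beta> - {line w0}" using hM l' by auto
        have x: "k v2 = z ^ j' * w0" using jM l' by (simp add: k_def)
        have "z ^ j' * w0 \<in> line w0" unfolding line_def using zpow_F by blast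
        moreover have "z ^ j' * w0 \<noteq> 0" using z_nz M by simp
        moreover have "z ^ j' * w0 \<in> line (rep L)" using kr e x r g by metis
        ultimately have "line w0 = line (rep L)" using line_meet M g by blast
        hence "L = line w0" using g by simp
        thus ?thesis using M r by simp
      next
        case r'
        note g' = GL[OF r'(1)]
        have k1: "k v1 \<noteq> 0" "k v1 \<in> line (rep L)" using kR[OF r(1), of j i] r g by auto
        have k2: "k v1 \<in> line (rep L')" using kR[OF r'(1), of j' i'] r' g' e by auto
        have "line (rep L) = line (rep L')" using line_meet[OF g(4) g'(4) k1(1) k1(2) k2] .
        hence LL: "L = L'" using g g' by simp
        hence "z ^ j * G L ^ i * rep L = z ^ j' * G L ^ i' * rep L" using e r r' by (simp add: k_def)
        hence "z ^ j * G L ^ i = z ^ j' * G L ^ i'" using g(4) by simp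
        hence "(j, i) = (j', i')" using inj_onD[OF enum_inj[OF g(2,3)], of "(j, i)" "(j', i')"]
          r r' LL by auto
        thus ?thesis using r r' LL by simp
      qed
    qed
  qed
  have bij: "bij_betw k V UNIV" unfolding bij_betw_def using inj onto by blast
  have edge: "(v, w) \<in> snd T \<longleftrightarrow> w = \<tau> v" if "v \<in> V" "w \<in> V" for v w
    using edge_target[of v M q c a \<beta> S w] that unfolding V_def T_def \<tau>_def by blast
  have "dg_iso (fgraph ff) (V, snd T)" by (rule iso_fun[OF bij cl comm edge])
  thus ?thesis unfolding V_def T_def by simp
qed

end


lemma (in FF) one_ne_neg: "(1::'a) \<noteq> -1"
proof
  assume h: "(1::'a) = -1"
  have "\<beta> ^ q = \<beta>" using beta_frob h by (metis mult_minus1 mult_1)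
  thus False using beta_notF by (simp add: subF_def)
qed

lemma char_frob:
  fixes p k q :: nat
  assumes "prime p" "q = p ^ k" "card (UNIV :: 'a::{field,finite} set) = q ^ 2"
  shows "(x + y :: 'a) ^ q = x ^ q + y ^ q"
proof -
  have pos: "CHAR('a) > 0" by (rule finite_imp_CHAR_pos) simp
  have pc: "prime CHAR('a)" by (rule prime_CHAR_semidom[OF pos])
  have "CHAR('a) dvd card (UNIV :: 'a set)" by (rule CHAR_dvd_CARD)
  hence "CHAR('a) dvd p ^ (k * 2)" using assms by (simp add: power_mult)
  hence "CHAR('a) dvd p" using prime_dvd_power[OF pc] by blast
  hence "CHAR('a) = p" using primes_dvd_imp_eq[OF pc assms(1)] by blast
  thus ?thesis using freshmans_dream'[OF pc, of q k] assms by simp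
qed

theorem mainTheorem6:
  fixes q p k :: nat and c a \<beta> :: "'a::{field,finite}"
  assumes "prime p" and "odd p" and "k \<ge> 1" and "q = p ^ k"
    and "card (UNIV :: 'a set) = q ^ 2"
    and "a \<in> subF q" and "a \<noteq> 0" and "\<not> (\<exists>z\<in>subF q. z ^ 2 = a)"
    and "\<beta> ^ 2 = a"
    and "c \<in> subF q"
  defines "f \<equiv> (\<lambda>X::'a. X * (X ^ (q - 1) - c) ^ (q + 1))"
  shows "(c \<notin> {0, 1, -1} \<longrightarrow>
           dg_iso (fgraph f) (dg_union (cyc 1) (line_cycles q c a \<beta> (P1 q \<beta>))))
       \<and> ((c = 1 \<or> c = -1) \<longrightarrow>
           dg_iso (fgraph f)
             (dg_union (cyc_tree 1 (q - 1))
               (line_cycles q c a \<beta>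
                  (P1 q \<beta> - {if c = 1 then Lline q \<beta> 1 0 else Lline q \<beta> 0 1}))))"
proof -
  have p3: "p \<ge> 3" using prime_ge_2_nat[OF assms(1)] assms(2) by (cases "p = 2") auto
  have q3: "q \<ge> 3"
  proof -
    have "p ^ 1 \<le> p ^ k" using assms(3) p3 by (intro power_increasing) auto
    thus ?thesis using p3 assms(4) by simp
  qed
  have qodd: "odd q" using assms(2,4) by simp
  interpret FF q a \<beta> c
    by (rule FF.intro[OF q3 qodd assms(5) char_frob[OF assms(1) assms(4) assms(5)] assms(6,7,8,9,10)])
  have ff: "f = ff" unfolding f_def ff_def by (rule ext) simp
  have gl: "gline q c a \<beta> L = gval (rep L)" if "L \<in> P1 q \<beta>" for L
    using gline_eq[OF that] rep[OF that] by blast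
  show ?thesis
  proof (intro conjI impI)
    assume c: "c \<notin> {0, 1, -1}"
    have "dg_iso (fgraph ff) (dg_union (cyc_tree 1 0) (line_cycles q c a \<beta> (P1 q \<beta>)))"
    proof (rule main)
      fix L assume L: "L \<in> P1 q \<beta>"
      show "gline q c a \<beta> L \<noteq> 0" using gl[OF L] gval_zero rep[OF L] c by auto
    qed auto
    thus "dg_iso (fgraph f) (dg_union (cyc 1) (line_cycles q c a \<beta> (P1 q \<beta>)))"
      unfolding ff cyc_def .
  next
    assume c: "c = 1 \<or> c = -1"
    define w0 where "w0 = (if c = 1 then 1 else \<beta>)"
    have w0: "w0 \<noteq> 0" "gval w0 = 0" using beta_nz c beta_pow q3 unfolding w0_def gval_def by auto
    have Lw: "(if c = 1 then Lline q \<beta> 1 0 else Lline q \<beta> 0 1) = line w0"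
      unfolding w0_def Lline_line by simp
    have "dg_iso (fgraph ff) (dg_union (cyc_tree 1 (q - 1)) (line_cycles q c a \<beta> (P1 q \<beta> - {line w0})))"
    proof (rule main)
      fix L assume L: "L \<in> P1 q \<beta> - {line w0}"
      show "gline q c a \<beta> L \<noteq> 0"
      proof
        assume "gline q c a \<beta> L = 0"
        hence "gval (rep L) = 0" using gl L by simp
        moreover have rL: "rep L \<noteq> 0" "L = line (rep L)" using rep L by auto
        ultimately have d: "(c = 1 \<and> line (rep L) = line 1) \<or> (c = -1 \<and> line (rep L) = line \<beta>)"
          using gval_zero by blast
        have "line (rep L) = line w0"
        proof (cases "c = 1")
          case True thus ?thesis using d one_ne_neg unfolding w0_def by auto
        next
          case False thus ?thesis using d unfolding w0_def by simp
        qed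
        hence "L = line w0" using rL by simp
        thus False using L by simp
      qed
    qed (use w0 in auto)
    thus "dg_iso (fgraph f) (dg_union (cyc_tree 1 (q - 1)) (line_cycles q c a \<beta>
                  (P1 q \<beta> - {if c = 1 then Lline q \<beta> 1 0 else Lline q \<beta> 0 1})))"
      unfolding ff Lw .
  qed
qed


end
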